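(* Let $\rho:\mathbb{Z}\to[0,\infty)$ be a weight with finite moments, i.e. $\sum_{x\in\mathbb{Z}}|x|^k\rho(x)<\infty$ for all $k\ge 0$, and let $f,g$ be polynomials satisfying the discrete Pearson equation $$f(x+1)\rho(x+1)-f(x)\rho(x)=g(x)\rho(x)\qquad (x\in\mathbb{Z})$$ (equivalently $\rho(x+1)/\rho(x)=(f(x)+g(x))/f(x+1)$ where $\rho(x)\neq 0$). Assume that $\rho(x)f(x)$ vanishes at the end points of the support of $\rho$. Define the operator on polynomials $$\mathcal{A}_{\rm l}=g(x)T+f(x)(\Delta+\nabla),$$ where $T\phi(x)=\phi(x+1)$, $\Delta\phi(x)=\phi(x+1)-\phi(x)$, $\nabla\phi(x)=\phi(x)-\phi(x-1)$. For real polynomials $\phi,\psi$ let $\langle\phi,\psi\rangle=\sum_{x\in\mathbb{Z}}\phi(x)\psi(x)\rho(x)$ and, for a weight $\omega$, $\langle\phi,\psi\rangle_{s,\omega}=\sum_{x\in\mathbb{Z}}[\phi(x)\psi(x+1)-\phi(x+1)\psi(x)]\omega(x)$. Then for all real polynomials $\phi,\psi$: (1) $\langle\mathcal{A}_{\rm l}\phi,\psi\rangle=-\langle\phi,\mathcal{A}_{\rm l}\psi\rangle$; (2) $\langle\phi,\mathcal{A}_{\rm l}\psi\rangle=\langle\phi,\psi\rangle_{s,\omega}$ with $\omega(x)=f(x+1)\rho(x+1)$.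
   Context: All sums are over the integer lattice $\mathbb{Z}$, with $\rho$ taken to be zero outside its support. *)

theory Defs
  imports "HOL-Analysis.Analysis" "HOL-Computational_Algebra.Polynomial"
begin

definition shiftT :: "real poly \<Rightarrow> real poly" where
  "shiftT \<phi> = pcompose \<phi> [:1, 1:]"

definition fwd_diff :: "real poly \<Rightarrow> real poly" where
  "fwd_diff \<phi> = pcompose \<phi> [:1, 1:] - \<phi>"

definition bwd_diff :: "real poly \<Rightarrow> real poly" where
  "bwd_diff \<phi> = \<phi> - pcompose \<phi> [:-1, 1:]"

definition A_l :: "real poly \<Rightarrow> real poly \<Rightarrow> real poly \<Rightarrow> real poly" where
  "A_l f g \<phi> = g * shiftT \<phi> + f * (fwd_diff \<phi> + bwd_diff \<phi>)"

definition wip :: "(int \<Rightarrow> real) \<Rightarrow> real poly \<Rightarrow> real poly \<Rightarrow> real" where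
  "wip \<rho> \<phi> \<psi> = (\<Sum>\<^sub>\<infinity>x\<in>(UNIV::int set).
      poly \<phi> (of_int x) * poly \<psi> (of_int x) * \<rho> x)"

definition sip :: "(int \<Rightarrow> real) \<Rightarrow> real poly \<Rightarrow> real poly \<Rightarrow> real" where
  "sip \<omega> \<phi> \<psi> = (\<Sum>\<^sub>\<infinity>x\<in>(UNIV::int set).
      (poly \<phi> (of_int x) * poly \<psi> (of_int (x + 1))
        - poly \<phi> (of_int (x + 1)) * poly \<psi> (of_int x)) * \<omega> x)"

end

theory Submission
  imports Defs
begin

lemma summable_on_finsum_aux:
  fixes F :: "nat \<Rightarrow> int \<Rightarrow> real"
  assumes "finite I" "\<And>i. i \<in> I \<Longrightarrow> F i summable_on A"
  shows "(\<lambda>x. \<Sum>i\<in>I. F i x) summable_on A"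
  using assms
proof (induction I rule: finite_induct)
  case empty then show ?case by simp
next
  case (insert a I)
  have "(\<lambda>x. F a x + (\<Sum>i\<in>I. F i x)) summable_on A"
    using insert by (intro summable_on_add) auto
  then show ?case using insert by simp
qed

lemma poly_rho_summable:
  fixes \<rho> :: "int \<Rightarrow> real"
  assumes nonneg: "\<And>x. \<rho> x \<ge> 0"
    and moments: "\<And>k::nat. (\<lambda>x. \<bar>real_of_int x\<bar> ^ k * \<rho> x) summable_on (UNIV::int set)"
  shows "(\<lambda>x. poly p (of_int x) * \<rho> x) summable_on (UNIV::int set)"
proof -
  have pw: "\<And>i. (\<lambda>x. real_of_int x ^ i * \<rho> x) summable_on (UNIV::int set)"
  proof -
    fix i
    have "(\<lambda>x. norm (real_of_int x ^ i * \<rho> x)) summable_on (UNIV::int set)"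
      by (rule Infinite_Sum.abs_summable_on_comparison_test'[OF moments[of i]])
         (simp add: abs_mult power_abs nonneg)
    then show "(\<lambda>x. real_of_int x ^ i * \<rho> x) summable_on (UNIV::int set)"
      by (rule Infinite_Sum.abs_summable_summable)
  qed
  have "(\<lambda>x. \<Sum>i\<in>{..degree p}. coeff p i * (real_of_int x ^ i * \<rho> x)) summable_on (UNIV::int set)"
    by (rule summable_on_finsum_aux) (auto intro: summable_on_cmult_right pw)
  moreover have "\<And>x. (\<Sum>i\<in>{..degree p}. coeff p i * (real_of_int x ^ i * \<rho> x)) = poly p (of_int x) * \<rho> x"
    by (simp add: poly_altdef sum_distrib_right mult.assoc)
  ultimately show ?thesis by simp
qed

lemma poly_rho_shift_summable:
  fixes \<rho> :: "int \<Rightarrow> real"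
  assumes nonneg: "\<And>x. \<rho> x \<ge> 0"
    and moments: "\<And>k::nat. (\<lambda>x. \<bar>real_of_int x\<bar> ^ k * \<rho> x) summable_on (UNIV::int set)"
  shows "(\<lambda>x. poly p (of_int (x + 1)) * \<rho> (x + 1)) summable_on (UNIV::int set)"
proof -
  have b: "bij_betw (\<lambda>x::int. x + 1) UNIV UNIV"
    by (rule bij_betwI[where g="\<lambda>x. x - 1"]) auto
  show ?thesis
    using summable_on_reindex_bij_betw[OF b, of "\<lambda>x. poly p (of_int x) * \<rho> x"]
      poly_rho_summable[OF nonneg moments, of p] by simp
qed

lemma part2:
  fixes \<rho> :: "int \<Rightarrow> real" and f g :: "real poly"
  assumes nonneg: "\<And>x. \<rho> x \<ge> 0"
    and moments: "\<And>k::nat. (\<lambda>x. \<bar>real_of_int x\<bar> ^ k * \<rho> x) summable_on (UNIV::int set)"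
    and pearson: "\<And>x. poly f (of_int (x + 1)) * \<rho> (x + 1) - poly f (of_int x) * \<rho> x
                        = poly g (of_int x) * \<rho> x"
  shows "wip \<rho> \<phi> (A_l f g \<psi>) =
           sip (\<lambda>x. poly f (of_int (x + 1)) * \<rho> (x + 1)) \<phi> \<psi>"
proof -
  define w where "w x = poly f (of_int x) * \<rho> x" for x
  define T where "T y = poly \<phi> (of_int y - 1) * poly \<psi> (of_int y) * w y" for y
  define S1 where "S1 x = poly \<phi> (of_int x) * poly \<psi> (of_int x + 1) * w (x + 1)" for x
  define S2 where "S2 x = poly \<phi> (of_int x + 1) * poly \<psi> (of_int x) * w (x + 1)" for x
  define S3 where "S3 x = poly \<phi> (of_int x) * poly \<psi> (of_int x - 1) * w x" for x
  have b: "bij_betw (\<lambda>x::int. x + 1) UNIV UNIV"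
    by (rule bij_betwI[where g="\<lambda>x. x - 1"]) auto
  have S3s: "S3 summable_on UNIV"
    using poly_rho_summable[OF nonneg moments, of "\<phi> * pcompose \<psi> [:-1,1:] * f"]
    by (simp add: S3_def[abs_def] w_def poly_pcompose mult_ac)
  have S1s: "S1 summable_on UNIV"
    using poly_rho_shift_summable[OF nonneg moments, of "pcompose \<phi> [:-1,1:] * \<psi> * f"]
    by (simp add: S1_def[abs_def] w_def poly_pcompose mult_ac)
  have S2s: "S2 summable_on UNIV"
    using poly_rho_shift_summable[OF nonneg moments, of "\<phi> * pcompose \<psi> [:-1,1:] * f"]
    by (simp add: S2_def[abs_def] w_def poly_pcompose mult_ac)
  have S32: "infsum S3 UNIV = infsum S2 UNIV"
    using infsum_reindex_bij_betw[OF b, of S3] by (simp add: S3_def S2_def[abs_def])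
  have gw: "poly g (of_int x) * \<rho> x = w (x + 1) - w x" for x
    using pearson[of x] by (simp add: w_def)
  have eq1: "poly \<phi> (of_int x) * poly (A_l f g \<psi>) (of_int x) * \<rho> x = S1 x + - S3 x" for x
  proof -
    have "poly \<phi> (of_int x) * poly (A_l f g \<psi>) (of_int x) * \<rho> x
       = poly \<phi> (of_int x) * (poly g (of_int x) * \<rho> x * poly \<psi> (of_int x + 1)
          + w x * (poly \<psi> (of_int x + 1) - poly \<psi> (of_int x - 1)))"
      by (simp add: A_l_def shiftT_def fwd_diff_def bwd_diff_def poly_pcompose w_def algebra_simps)
    also have "\<dots> = S1 x + - S3 x"
      unfolding gw by (simp add: S1_def S3_def algebra_simps)
    finally show ?thesis .
  qed
  have eq2: "(poly \<phi> (of_int x) * poly \<psi> (of_int (x + 1))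
        - poly \<phi> (of_int (x + 1)) * poly \<psi> (of_int x)) * (poly f (of_int (x + 1)) * \<rho> (x + 1))
        = S1 x + - S2 x" for x
    by (simp add: S1_def S2_def w_def algebra_simps)
  have "wip \<rho> \<phi> (A_l f g \<psi>) = infsum (\<lambda>x. S1 x + - S3 x) UNIV"
    unfolding wip_def using eq1 by simp
  also have "\<dots> = infsum S1 UNIV - infsum S3 UNIV"
    using infsum_add[OF S1s summable_on_uminus[THEN iffD2, OF S3s]] infsum_uminus[of S3] by simp
  also have "\<dots> = infsum S1 UNIV - infsum S2 UNIV" using S32 by simp
  also have "\<dots> = infsum (\<lambda>x. S1 x + - S2 x) UNIV"
    using infsum_add[OF S1s summable_on_uminus[THEN iffD2, OF S2s]] infsum_uminus[of S2] by simp
  also have "\<dots> = sip (\<lambda>x. poly f (of_int (x + 1)) * \<rho> (x + 1)) \<phi> \<psi>"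
    unfolding sip_def using eq2 by simp
  finally show ?thesis .
qed

theorem proposition3p6:
  fixes \<rho> :: "int \<Rightarrow> real" and f g :: "real poly"
  assumes nonneg: "\<And>x. \<rho> x \<ge> 0"
    and moments: "\<And>k::nat. (\<lambda>x. \<bar>real_of_int x\<bar> ^ k * \<rho> x) summable_on (UNIV::int set)"
    and pearson: "\<And>x. poly f (of_int (x + 1)) * \<rho> (x + 1) - poly f (of_int x) * \<rho> x
                        = poly g (of_int x) * \<rho> x"
    and lower_end: "\<And>a. \<rho> a \<noteq> 0 \<Longrightarrow> (\<forall>y<a. \<rho> y = 0) \<Longrightarrow> \<rho> a * poly f (of_int a) = 0"
    and upper_end: "\<And>b. \<rho> b \<noteq> 0 \<Longrightarrow> (\<forall>y>b. \<rho> y = 0) \<Longrightarrow>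
                      \<rho> (b + 1) * poly f (of_int (b + 1)) = 0"
  shows "wip \<rho> (A_l f g \<phi>) \<psi> = - wip \<rho> \<phi> (A_l f g \<psi>) \<and>
         wip \<rho> \<phi> (A_l f g \<psi>) =
           sip (\<lambda>x. poly f (of_int (x + 1)) * \<rho> (x + 1)) \<phi> \<psi>"
proof
  have p2: "\<And>a b. wip \<rho> a (A_l f g b) = sip (\<lambda>x. poly f (of_int (x + 1)) * \<rho> (x + 1)) a b"
    by (rule part2[OF nonneg moments pearson])
  have c: "wip \<rho> (A_l f g \<phi>) \<psi> = wip \<rho> \<psi> (A_l f g \<phi>)"
    unfolding wip_def by (simp add: mult_ac)
  have s: "sip (\<lambda>x. poly f (of_int (x + 1)) * \<rho> (x + 1)) \<psi> \<phi>
         = - sip (\<lambda>x. poly f (of_int (x + 1)) * \<rho> (x + 1)) \<phi> \<psi>"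
    unfolding sip_def by (subst infsum_uminus[symmetric]) (simp add: algebra_simps)
  show "wip \<rho> (A_l f g \<phi>) \<psi> = - wip \<rho> \<phi> (A_l f g \<psi>)"
    using c s p2 by simp
  show "wip \<rho> \<phi> (A_l f g \<psi>) = sip (\<lambda>x. poly f (of_int (x + 1)) * \<rho> (x + 1)) \<phi> \<psi>"
    by (rule p2)
qed

end
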